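(* Let $(N,\langle\cdot,\cdot\rangle,\varphi)$ be a modified $H$-type group (see context). Let $z,z'\in\mathfrak z$ and $e,e'\in\mathfrak v$ be pseudo-orthonormal, i.e. $\langle z,z\rangle,\langle z',z'\rangle,\langle e,e\rangle,\langle e',e'\rangle\in\{\pm1\}$, $\langle z,z'\rangle=0$ and $\langle e,e'\rangle=0$. Then the sectional curvatures satisfy $$K(z,z')=0,\qquad K(z,e)=\tfrac14\,\varepsilon_z\,\varphi(z),\qquad K(e,e')=-\tfrac34\,\varepsilon_e\,\varepsilon_{e'}\,\langle [e,e'],[e,e']\rangle,$$ where $\varepsilon_u=\langle u,u\rangle=\pm1$ for $u\in\{z,e,e'\}$.
   Context: Let $N$ be a 2-step nilpotent real Lie group with Lie algebra $\mathfrak n$, Lie bracket $[\cdot,\cdot]$ and center $\mathfrak z$, endowed with a left-invariant pseudo-Riemannian metric $\langle\cdot,\cdot\rangle$ (identified with an inner product on $\mathfrak n$) for which $\mathfrak z$ is nondegenerate. Put $\mathfrak v=\mathfrak z^\perp$, so $\mathfrak n=\mathfrak z\oplus\mathfrak v$ orthogonally. For $z\in\mathfrak z$ define the skew-adjoint endomorphism $j(z)$ of $\mathfrak v$ by $\langle [x,y],z\rangle=\langle y,j(z)x\rangle$ for all $x,y\in\mathfrak v$. Given a quadratic form $\varphi$ on $\mathfrak z$, the triple $(N,\langle\cdot,\cdot\rangle,\varphi)$ is called a modified $H$-type group if $\langle j(z)x,j(z)y\rangle=\varphi(z)\langle x,y\rangle$ for all $z\in\mathfrak z$, $x,y\in\mathfrak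 v$; equivalently $j(z)^2=-\varphi(z)\,\mathrm{Id}_{\mathfrak v}$ for all $z\in\mathfrak z$. ($\varphi$ may be indefinite or degenerate.) Sectional curvature of a nondegenerate plane spanned by $u,w$ is $K(u,w)=\langle R(u,w)w,u\rangle/(\langle u,u\rangle\langle w,w\rangle-\langle u,w\rangle^2)$ for the Levi-Civita curvature tensor $R$. *)

theory Defs
  imports "HOL-Analysis.Analysis"
begin

text \<open>Algebraic model of a simply connected Lie group with left-invariant
pseudo-Riemannian metric: the Lie algebra n is a finite-dimensional real
vector space (type 'a :: euclidean_space; its own Euclidean inner product is
never used), the metric is a nondegenerate symmetric bilinear form g, and
br is the Lie bracket.\<close>

definition lie_bracket :: "('a::real_vector \<Rightarrow> 'a \<Rightarrow> 'a) \<Rightarrow> bool" where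
  "lie_bracket br \<longleftrightarrow> bilinear br \<and> (\<forall>x. br x x = 0) \<and>
     (\<forall>x y w. br x (br y w) + br y (br w x) + br w (br x y) = 0)"

definition two_step_nilpotent :: "('a::real_vector \<Rightarrow> 'a \<Rightarrow> 'a) \<Rightarrow> bool" where
  "two_step_nilpotent br \<longleftrightarrow> (\<forall>x y w. br (br x y) w = 0) \<and> (\<exists>x y. br x y \<noteq> 0)"

definition pseudo_metric :: "('a::real_vector \<Rightarrow> 'a \<Rightarrow> real) \<Rightarrow> bool" where
  "pseudo_metric g \<longleftrightarrow> bilinear g \<and> (\<forall>x y. g x y = g y x) \<and>
     (\<forall>x. (\<forall>y. g x y = 0) \<longrightarrow> x = 0)"

definition center :: "('a::real_vector \<Rightarrow> 'a \<Rightarrow> 'a) \<Rightarrow> 'a set" where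
  "center br = {z. \<forall>x. br z x = 0}"

definition vpart :: "('a::real_vector \<Rightarrow> 'a \<Rightarrow> real) \<Rightarrow> ('a \<Rightarrow> 'a \<Rightarrow> 'a) \<Rightarrow> 'a set" where
  "vpart g br = {x. \<forall>z\<in>center br. g x z = 0}"

definition nondegenerate_on :: "('a::real_vector \<Rightarrow> 'a \<Rightarrow> real) \<Rightarrow> 'a set \<Rightarrow> bool" where
  "nondegenerate_on g S \<longleftrightarrow> (\<forall>x\<in>S. (\<forall>y\<in>S. g x y = 0) \<longrightarrow> x = 0)"

definition is_j :: "('a::real_vector \<Rightarrow> 'a \<Rightarrow> real) \<Rightarrow> ('a \<Rightarrow> 'a \<Rightarrow> 'a) \<Rightarrow> ('a \<Rightarrow> 'a \<Rightarrow> 'a) \<Rightarrow> bool" where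
  "is_j g br j \<longleftrightarrow>
     (\<forall>z\<in>center br. \<forall>x\<in>vpart g br. j z x \<in> vpart g br) \<and>
     (\<forall>z\<in>center br. \<forall>x\<in>vpart g br. \<forall>y\<in>vpart g br. g (br x y) z = g y (j z x))"

definition quadratic_form_on :: "'a::real_vector set \<Rightarrow> ('a \<Rightarrow> real) \<Rightarrow> bool" where
  "quadratic_form_on S \<phi> \<longleftrightarrow>
     (\<exists>B::'a \<Rightarrow> 'a \<Rightarrow> real. bilinear B \<and> (\<forall>x y. B x y = B y x) \<and> (\<forall>z\<in>S. \<phi> z = B z z))"

definition modified_H_type ::
  "('a::euclidean_space \<Rightarrow> 'a \<Rightarrow> real) \<Rightarrow> ('a \<Rightarrow> 'a \<Rightarrow> 'a) \<Rightarrow> ('a \<Rightarrow> real) \<Rightarrow> bool" where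
  "modified_H_type g br \<phi> \<longleftrightarrow>
     lie_bracket br \<and> two_step_nilpotent br \<and> pseudo_metric g \<and>
     nondegenerate_on g (center br) \<and> quadratic_form_on (center br) \<phi> \<and>
     (\<exists>j. is_j g br j \<and>
        (\<forall>z\<in>center br. \<forall>x\<in>vpart g br. \<forall>y\<in>vpart g br.
            g (j z x) (j z y) = \<phi> z * g x y))"

text \<open>Levi-Civita connection on left-invariant vector fields (Koszul formula):
  2 g (nabla x y) w = g [x,y] w - g [y,w] x + g [w,x] y.\<close>
definition lc_conn :: "('a::real_vector \<Rightarrow> 'a \<Rightarrow> real) \<Rightarrow> ('a \<Rightarrow> 'a \<Rightarrow> 'a) \<Rightarrow> 'a \<Rightarrow> 'a \<Rightarrow> 'a" where
  "lc_conn g br x y = (THE u. \<forall>w. 2 * g u w = g (br x y) w - g (br y w) x + g (br w x) y)"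

definition curv :: "('a::real_vector \<Rightarrow> 'a \<Rightarrow> real) \<Rightarrow> ('a \<Rightarrow> 'a \<Rightarrow> 'a) \<Rightarrow> 'a \<Rightarrow> 'a \<Rightarrow> 'a \<Rightarrow> 'a" where
  "curv g br x y w = lc_conn g br x (lc_conn g br y w) - lc_conn g br y (lc_conn g br x w)
                     - lc_conn g br (br x y) w"

definition sec_curv :: "('a::real_vector \<Rightarrow> 'a \<Rightarrow> real) \<Rightarrow> ('a \<Rightarrow> 'a \<Rightarrow> 'a) \<Rightarrow> 'a \<Rightarrow> 'a \<Rightarrow> real" where
  "sec_curv g br u w = g (curv g br u w w) u / (g u u * g w w - (g u w)^2)"

end

theory Submission
  imports Defs
begin

lemma lin_expand:
  fixes f :: "'a::euclidean_space \<Rightarrow> real"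
  assumes "linear f" shows "f w = (\<Sum>b\<in>Basis. (w \<bullet> b) * f b)"
proof -
  have "f w = f (\<Sum>b\<in>Basis. (w \<bullet> b) *\<^sub>R b)" by (simp add: euclidean_representation)
  also have "\<dots> = (\<Sum>b\<in>Basis. (w \<bullet> b) * f b)"
    using assms by (simp add: linear_sum linear_scale)
  finally show ?thesis .
qed

lemma riesz:
  fixes g :: "'a::euclidean_space \<Rightarrow> 'a \<Rightarrow> real"
  assumes pm: "pseudo_metric g" and L: "linear L"
  shows "\<exists>x. \<forall>w. g x w = L w"
proof -
  have bl: "bilinear g" and sym: "\<And>x y. g x y = g y x" and nd: "\<And>x. (\<forall>y. g x y = 0) \<Longrightarrow> x = 0"
    using pm unfolding pseudo_metric_def by auto
  have lr: "linear (g x)" for x using bl unfolding bilinear_def by auto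
  have ll: "linear (\<lambda>x. g x y)" for y using bl unfolding bilinear_def by auto
  define T where "T x = (\<Sum>b\<in>Basis. g x b *\<^sub>R b)" for x
  have Tb: "T x \<bullet> c = g x c" if "c \<in> Basis" for x c
    using that by (simp add: T_def inner_sum_left inner_Basis if_distrib cong: if_cong)
  have linT: "linear T"
    by (rule linearI) (simp_all add: T_def linear_add[OF ll] linear_scale[OF ll] scaleR_add_left sum.distrib scaleR_sum_right)
  have injT: "inj T"
  proof (rule linear_injective_0[THEN iffD2, OF linT], intro allI impI)
    fix x assume "T x = 0"
    then have "g x c = 0" if "c \<in> Basis" for c using Tb[OF that, of x] by simp
    then have "g x y = 0" for y using lin_expand[OF lr, of x y] by simp
    then show "x = 0" using nd by blast
  qed
  have "surj T" using linear_injective_imp_surjective[OF linT injT] by simp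
  then obtain x where x: "T x = (\<Sum>b\<in>Basis. L b *\<^sub>R b)" by (metis surjE)
  have "g x c = L c" if "c \<in> Basis" for c
    using Tb[OF that, of x] that by (simp add: x inner_sum_left inner_Basis if_distrib cong: if_cong)
  then have "g x w = L w" for w
    using lin_expand[OF lr, of x w] lin_expand[OF L, of w] by simp
  then show ?thesis by blast
qed

lemma conn:
  fixes g :: "'a::euclidean_space \<Rightarrow> 'a \<Rightarrow> real"
  assumes pm: "pseudo_metric g" and bb: "bilinear br"
  shows "2 * g (lc_conn g br x y) w = g (br x y) w - g (br y w) x + g (br w x) y"
proof -
  have bl: "bilinear g" and nd: "\<And>x. (\<forall>y. g x y = 0) \<Longrightarrow> x = 0"
    using pm unfolding pseudo_metric_def by auto
  define L where "L w = (g (br x y) w - g (br y w) x + g (br w x) y) / 2" for w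
  have "linear L"
    apply (rule linearI) apply (simp_all add: L_def bilinear_radd[OF bl] bilinear_ladd[OF bl]
        bilinear_radd[OF bb] bilinear_ladd[OF bb] bilinear_rmul[OF bl] bilinear_lmul[OF bl]
        bilinear_rmul[OF bb] bilinear_lmul[OF bb])
    apply (simp_all add: field_simps)
    done
  then obtain u where u: "\<forall>w. g u w = L w" using riesz[OF pm] by blast
  let ?P = "\<lambda>u. \<forall>w. 2 * g u w = g (br x y) w - g (br y w) x + g (br w x) y"
  have Pu: "?P u" using u by (simp add: L_def algebra_simps)
  have "\<exists>!u. ?P u"
  proof (rule ex1I[of _ u])
    show "?P u" by (rule Pu)
    fix v assume "?P v"
    then have "\<forall>w. g (v - u) w = 0" using Pu
      by (metis (no_types, lifting) bilinear_lsub[OF bl] diff_self mult_cancel_left zero_neq_numeral)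
    then show "v = u" using nd by fastforce
  qed
  from theI'[OF this] show ?thesis unfolding lc_conn_def by blast
qed

theorem theorem3p3:
  fixes g :: "'a::euclidean_space \<Rightarrow> 'a \<Rightarrow> real"
    and br :: "'a \<Rightarrow> 'a \<Rightarrow> 'a"
    and \<phi> :: "'a \<Rightarrow> real"
    and z z' e e' :: 'a
  assumes "modified_H_type g br \<phi>"
    and "z \<in> center br" and "z' \<in> center br"
    and "e \<in> vpart g br" and "e' \<in> vpart g br"
    and "g z z \<in> {1, -1}" and "g z' z' \<in> {1, -1}"
    and "g e e \<in> {1, -1}" and "g e' e' \<in> {1, -1}"
    and "g z z' = 0" and "g e e' = 0"
  shows "sec_curv g br z z' = 0
    \<and> sec_curv g br z e = 1/4 * g z z * \<phi> z
    \<and> sec_curv g br e e' = - 3/4 * g e e * g e' e' * g (br e e') (br e e')"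
proof -
  note H = assms(1)[unfolded modified_H_type_def]
  have lb: "lie_bracket br" and tn: "two_step_nilpotent br" and pm: "pseudo_metric g"
    using H by auto
  obtain j where isj: "is_j g br j" and jphi: "\<forall>z\<in>center br. \<forall>x\<in>vpart g br. \<forall>y\<in>vpart g br.
            g (j z x) (j z y) = \<phi> z * g x y" using H by blast
  have bb: "bilinear br" and brr: "\<And>x. br x x = 0" using lb unfolding lie_bracket_def by auto
  have bl: "bilinear g" and sym: "\<And>x y. g x y = g y x" and nd: "\<And>x. (\<forall>y. g x y = 0) \<Longrightarrow> x = 0"
    using pm unfolding pseudo_metric_def by auto
  have g0: "g 0 w = 0" "g w 0 = 0" for w using bilinear_lzero[OF bl] bilinear_rzero[OF bl] by auto
  have b0: "br 0 w = 0" "br w 0 = 0" for w using bilinear_lzero[OF bb] bilinear_rzero[OF bb] by auto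
  have skew: "br x y = - br y x" for x y
  proof -
    have 1: "br (x+y) (x+y) = br x (x+y) + br y (x+y)" by (rule bilinear_ladd[OF bb])
    have 2: "br x (x+y) = br x x + br x y" by (rule bilinear_radd[OF bb])
    have 3: "br y (x+y) = br y x + br y y" by (rule bilinear_radd[OF bb])
    have "br x y + br y x = br (x+y) (x+y) - br x x - br y y"
      unfolding 1 2 3 by (simp add: algebra_simps)
    then have "br x y + br y x = 0" by (simp add: brr)
    then show ?thesis by (simp add: eq_neg_iff_add_eq_0)
  qed
  have cen: "br x y \<in> center br" for x y using tn unfolding two_step_nilpotent_def center_def by auto
  have Z: "br c x = 0" "br x c = 0" if "c \<in> center br" for c x
    using that skew[of x c] unfolding center_def by auto
  have V: "g x c = 0" "g c x = 0" if "x \<in> vpart g br" "c \<in> center br" for x c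
    using that sym[of x c] unfolding vpart_def by auto
  define N where "N = lc_conn g br"
  have K: "2 * g (N x y) w = g (br x y) w - g (br y w) x + g (br w x) y" for x y w
    unfolding N_def by (rule conn[OF pm bb])
  have zero: "u = 0" if "\<And>w. g u w = 0" for u using nd that by blast
  have N0: "N x 0 = 0" "N 0 y = 0" for x y
    by (rule zero, use K[of x 0] K[of 0 y] in \<open>auto simp: g0 b0\<close>)+
  have Nvv: "N x x = 0" if "x \<in> vpart g br" for x
  proof (rule zero)
    fix w show "g (N x x) w = 0" using K[of x x w] V[OF that cen] by (simp add: brr g0)
  qed
  have ez: "g e z = 0" "g z e = 0" "g e' z = 0" using V assms by auto
  have lsub: "g (a - b) c = g a c - g b c" for a b c by (rule bilinear_lsub[OF bl])
  have N1: "N z z' = 0" "N z' z' = 0"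
    by (rule zero, use K[of z z'] K[of z' z'] Z assms(2,3) in \<open>simp add: g0\<close>)+
  have c1: "sec_curv g br z z' = 0"
    unfolding sec_curv_def curv_def N_def[symmetric] using N1 N0 Z(1)[OF assms(2)]
    by (simp add: g0)
  define a where "a = N z e"
  have av: "a \<in> vpart g br"
    unfolding vpart_def
  proof (safe)
    fix c assume c: "c \<in> center br"
    show "g a c = 0" using K[of z e c] Z[OF c] Z[OF assms(2)] by (simp add: a_def g0)
  qed
  have jv: "j z e \<in> vpart g br" and jbr: "\<And>y. y \<in> vpart g br \<Longrightarrow> g (br e y) z = g y (j z e)"
    using isj assms(2,4) unfolding is_j_def by auto
  have "2 * g a (j z e) = - g (j z e) (j z e)"
    using K[of z e "j z e"] Z[OF assms(2)] jbr[OF jv] by (simp add: a_def g0)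
  also have "\<dots> = - \<phi> z * g e e" using jphi assms(2,4) by simp
  finally have aj: "2 * g a (j z e) = - \<phi> z * g e e" .
  have "2 * g (N e a) z = g (br e a) z"
    using K[of e a z] Z[OF assms(2)] by (simp add: g0)
  also have "\<dots> = g a (j z e)" using jbr[OF av] .
  finally have num2: "g (N e a) z = - \<phi> z * g e e / 4" using aj by simp
  have c2: "sec_curv g br z e = 1/4 * g z z * \<phi> z"
    unfolding sec_curv_def curv_def N_def[symmetric]
    using Nvv[OF assms(4)] N0 Z(1)[OF assms(2)] num2 ez assms(6,8)
    by (auto simp: lsub g0 a_def bilinear_lneg[OF bl])
  define c where "c = br e e'"
  have cc: "c \<in> center br" using cen c_def by simp
  define d where "d = N e e'"
  have dc: "2 * g d c = g c c" using K[of e e' c] Z[OF cc] by (simp add: d_def c_def g0)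
  have "2 * g (N e' d) e = g c d"
    using K[of e' d e] V(2)[OF assms(4) cen] V(2)[OF assms(5) cen] by (simp add: c_def)
  then have n1: "g (N e' d) e = g c c / 4" using dc sym[of c d] by simp
  have "2 * g (N c e') e = g c c"
    using K[of c e' e] Z[OF cc] skew[of e' e] by (simp add: c_def g0 bilinear_lneg[OF bl])
  then have n2: "g (N c e') e = g c c / 2" by simp
  have num3: "g (curv g br e e' e') e = - 3/4 * g c c"
    unfolding curv_def N_def[symmetric] using Nvv[OF assms(5)] N0 n1 n2
    by (simp add: lsub g0 d_def c_def[symmetric] bilinear_lneg[OF bl])
  have c3: "sec_curv g br e e' = - 3/4 * g e e * g e' e' * g (br e e') (br e e')"
    unfolding sec_curv_def num3 c_def[symmetric] using assms(8,9,11) by auto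
  show ?thesis using c1 c2 c3 by blast
qed
end
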